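(* $E_3\leq_{\mathrm{Learn}}\mathbf{PL}$: every $E_3$-learnable family of structures is $\mathbf{PL}$-learnable.
   Context: All structures are countable, have domain $\mathbb{N}$, are in a finite relational signature, and are identified with their atomic diagrams (elements of $2^{\mathbb{N}}$). A family of structures $\mathfrak{K}$ is a countable set of pairwise nonisomorphic such structures; $\mathcal{S}\restriction_s$ is the finite substructure on $\{0,\dots,s\}$; $\mathrm{LD}(\mathfrak{K})\subseteq2^{\mathbb{N}}$ is the set of structures with domain $\mathbb{N}$ isomorphic to a member of $\mathfrak{K}$ (subspace topology). For an equivalence relation $E$ on a space $X$, $\mathfrak{K}$ is $E$-learnable if there is a continuous $\Gamma:\mathrm{LD}(\mathfrak{K})\to X$ with $\mathcal{S}\cong\mathcal{S}'\iff\Gamma(\mathcal{S})E\Gamma(\mathcal{S}')$ on $\mathrm{LD}(\mathfrak{K})$. Fix a computable bijection $\langle\cdot,\cdot\rangle:\mathbb{N}^2\to\mathbb{N}$; for $p\in\mathbb{N}^{\mathbb{N}\times\mathbb{N}}$ let $p^{[m]}(n)=p(\langle m,n\rangle)$; $p\,E_0\,q$ (for $p,q\in\mathbb{N}^{\mathbb{N}}$) iff $\exists m\forall n\ge m\ p(n)=q(n)$; $p\,E_3\,q$ iff $\forall m\ p^{[m]}E_0q^{[m]}$. A learner is an arbitrary function from $\{\mathcal{S}\restriction_s:\mathcal{S}\in\mathrm{LD}(\mathfrak{K})\}$ to $\{\ulcorner\mathcal{A}\urcorner:\mathcal{A}\in\mathfrak{K}\}\cup\{?\}$. $\mathfrak{K}$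 is $\mathbf{PL}$-learnable if some learner $\mathbf{M}$ satisfies: for every $\mathcal{S}\in\mathrm{LD}(\mathfrak{K})$ and $\mathcal{A}\in\mathfrak{K}$, $\{n:\mathbf{M}(\mathcal{S}\restriction_n)=\ulcorner\mathcal{A}\urcorner\}$ is infinite iff $\mathcal{A}\cong\mathcal{S}$. *)

theory Defs
  imports "HOL-Analysis.Analysis" "HOL-Library.Nat_Bijection"
begin

text \<open>A finite relational signature is a list of arities: relation symbol i (for i < length sig)
has arity sig ! i. Atoms that are not well-formed for the signature are required to be False,
so that the set of diagrams is (homeomorphic to) Cantor space 2^N.\<close>

type_synonym diag = "nat \<times> nat list \<Rightarrow> bool"

definition wf_atom :: "nat list \<Rightarrow> nat \<times> nat list \<Rightarrow> bool" where
  "wf_atom sig a \<longleftrightarrow> fst a < length sig \<and> length (snd a) = sig ! fst a"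

definition is_structure :: "nat list \<Rightarrow> diag \<Rightarrow> bool" where
  "is_structure sig S \<longleftrightarrow> (\<forall>a. \<not> wf_atom sig a \<longrightarrow> \<not> S a)"

definition iso :: "nat list \<Rightarrow> diag \<Rightarrow> diag \<Rightarrow> bool" where
  "iso sig S T \<longleftrightarrow> (\<exists>f::nat \<Rightarrow> nat. bij f \<and>
     (\<forall>i xs. wf_atom sig (i, xs) \<longrightarrow> (S (i, xs) \<longleftrightarrow> T (i, map f xs))))"

definition family :: "nat list \<Rightarrow> diag set \<Rightarrow> bool" where
  "family sig K \<longleftrightarrow> countable K \<and> (\<forall>A\<in>K. is_structure sig A) \<and>
     (\<forall>A\<in>K. \<forall>B\<in>K. iso sig A B \<longrightarrow> A = B)"

definition LD :: "nat list \<Rightarrow> diag set \<Rightarrow> diag set" where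
  "LD sig K = {S. is_structure sig S \<and> (\<exists>A\<in>K. iso sig S A)}"

definition cantor_top :: "diag topology" where
  "cantor_top = product_topology (\<lambda>_. discrete_topology UNIV) UNIV"

definition baire_top :: "(nat \<Rightarrow> nat) topology" where
  "baire_top = product_topology (\<lambda>_. discrete_topology UNIV) UNIV"

definition E0 :: "(nat \<Rightarrow> nat) \<Rightarrow> (nat \<Rightarrow> nat) \<Rightarrow> bool" where
  "E0 p q \<longleftrightarrow> (\<exists>m. \<forall>n\<ge>m. p n = q n)"

definition column :: "(nat \<Rightarrow> nat) \<Rightarrow> nat \<Rightarrow> nat \<Rightarrow> nat" where
  "column p m n = p (prod_encode (m, n))"

definition E3 :: "(nat \<Rightarrow> nat) \<Rightarrow> (nat \<Rightarrow> nat) \<Rightarrow> bool" where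
  "E3 p q \<longleftrightarrow> (\<forall>m. E0 (column p m) (column q m))"

definition E3_learnable :: "nat list \<Rightarrow> diag set \<Rightarrow> bool" where
  "E3_learnable sig K \<longleftrightarrow> (\<exists>\<Gamma> :: diag \<Rightarrow> (nat \<Rightarrow> nat).
     continuous_map (subtopology cantor_top (LD sig K)) baire_top \<Gamma> \<and>
     (\<forall>S\<in>LD sig K. \<forall>T\<in>LD sig K. iso sig S T \<longleftrightarrow> E3 (\<Gamma> S) (\<Gamma> T)))"

definition restr :: "diag \<Rightarrow> nat \<Rightarrow> nat \<times> diag" where
  "restr S s = (s, \<lambda>a. set (snd a) \<subseteq> {..s} \<and> S a)"

text \<open>A learner outputs Some A (the code of A \<in> K) or None (the symbol ?).\<close>
definition PL_learnable :: "nat list \<Rightarrow> diag set \<Rightarrow> bool" where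
  "PL_learnable sig K \<longleftrightarrow> (\<exists>M :: nat \<times> diag \<Rightarrow> diag option.
     (\<forall>S\<in>LD sig K. \<forall>s. M (restr S s) \<in> Some ` K \<union> {None}) \<and>
     (\<forall>S\<in>LD sig K. \<forall>A\<in>K.
        infinite {n. M (restr S n) = Some A} \<longleftrightarrow> iso sig A S))"

end

theory Submission
  imports Defs
begin

lemma restr_agree:
  assumes "restr S s = restr T s" "set (snd a) \<subseteq> {..s}"
  shows "S a = T a"
proof -
  have "(\<lambda>a. set (snd a) \<subseteq> {..s} \<and> S a) = (\<lambda>a. set (snd a) \<subseteq> {..s} \<and> T a)"
    using assms(1) unfolding restr_def by simp
  from fun_cong[OF this, of a] assms(2) show ?thesis by simp
qed

lemma restr_mono:
  assumes "restr S s' = restr T s'" "s \<le> s'"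
  shows "restr S s = restr T s"
proof -
  have "\<And>a. set (snd a) \<subseteq> {..s} \<Longrightarrow> S a = T a"
    using restr_agree[OF assms(1)] assms(2) by fastforce
  then show ?thesis unfolding restr_def by fastforce
qed

lemma cont_point:
  assumes cont: "continuous_map (subtopology cantor_top L) baire_top \<Gamma>"
    and S: "S \<in> L"
  shows "\<exists>s. \<forall>S'\<in>L. restr S' s = restr S s \<longrightarrow> \<Gamma> S' x = \<Gamma> S x"
proof -
  have c: "continuous_map (subtopology cantor_top L) (discrete_topology UNIV) (\<lambda>S. \<Gamma> S x)"
  proof -
    have c0: "continuous_map (subtopology cantor_top L) (product_topology (\<lambda>_. discrete_topology UNIV) UNIV) \<Gamma>"
      using cont unfolding baire_top_def .
    have "continuous_map (product_topology (\<lambda>_::nat. discrete_topology (UNIV::nat set)) UNIV) (discrete_topology UNIV) (\<lambda>f. f x)"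
      by (rule continuous_map_product_projection) simp
    from continuous_map_compose[OF c0 this] show ?thesis by (simp add: o_def)
  qed
  have ts: "topspace (subtopology cantor_top L) = L"
    unfolding cantor_top_def by (simp add: PiE_UNIV_domain)
  have "openin (subtopology cantor_top L) {y \<in> topspace (subtopology cantor_top L). \<Gamma> y x \<in> {\<Gamma> S x}}"
    by (rule openin_continuous_map_preimage[OF c]) simp
  then obtain U where U: "openin cantor_top U" and W: "{y \<in> L. \<Gamma> y x \<in> {\<Gamma> S x}} = U \<inter> L"
    unfolding ts openin_subtopology by blast
  have "S \<in> U" using W S by blast
  with U obtain V where fin: "finite {a \<in> UNIV. V a \<noteq> topspace (discrete_topology UNIV)}"
    and inS: "S \<in> Pi\<^sub>E UNIV V" and sub: "Pi\<^sub>E UNIV V \<subseteq> U"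
    unfolding cantor_top_def openin_product_topology_alt by blast
  define F where "F = {a. V a \<noteq> UNIV}"
  have finF: "finite F" using fin unfolding F_def by simp
  define s where "s = Max (insert 0 (\<Union>a\<in>F. set (snd a)))"
  have fin2: "finite (insert 0 (\<Union>a\<in>F. set (snd a)))" using finF by simp
  have sF: "\<And>a. a \<in> F \<Longrightarrow> set (snd a) \<subseteq> {..s}"
    unfolding s_def using Max_ge[OF fin2] by fastforce
  show ?thesis
  proof (intro exI ballI impI)
    fix S' assume S': "S' \<in> L" and r: "restr S' s = restr S s"
    have "\<And>a. S' a \<in> V a"
    proof -
      fix a
      show "S' a \<in> V a"
      proof (cases "a \<in> F")
        case True
        then have "S' a = S a" using restr_agree[OF r sF] by blast
        then show ?thesis using inS by (auto simp: PiE_UNIV_domain)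
      next
        case False then show ?thesis unfolding F_def by simp
      qed
    qed
    then have "S' \<in> U" using sub by (auto simp: PiE_UNIV_domain)
    then show "\<Gamma> S' x = \<Gamma> S x" using W S' by blast
  qed
qed


lemma restr_restr: "t \<le> s \<Longrightarrow> restr (snd (restr S s)) t = restr S t"
  unfolding restr_def by (auto intro!: ext)

lemma fst_restr[simp]: "fst (restr S s) = s"
  unfolding restr_def by simp

locale pl_setup =
  fixes sig :: "nat list" and K :: "diag set" and \<Gamma> :: "diag \<Rightarrow> nat \<Rightarrow> nat"
  assumes fam: "family sig K"
    and cont: "continuous_map (subtopology cantor_top (LD sig K)) baire_top \<Gamma>"
    and red: "\<forall>S\<in>LD sig K. \<forall>T\<in>LD sig K. iso sig S T \<longleftrightarrow> E3 (\<Gamma> S) (\<Gamma> T)"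
begin

abbreviation "L \<equiv> LD sig K"

definition "I = to_nat_on K ` K"
definition "Ak k = from_nat_into K k"
definition "p k = \<Gamma> (Ak k)"
definition "rv \<sigma> x v = (\<forall>S'\<in>L. restr S' (fst \<sigma>) = \<sigma> \<longrightarrow> \<Gamma> S' x = v)"
definition "mm i j = (SOME m. \<not> E0 (column (p i) m) (column (p j) m))"
definition "Dc \<sigma> i j = card {n. n < fst \<sigma> \<and> (\<exists>v. rv \<sigma> (prod_encode (mm i j, n)) v \<and> v \<noteq> p i (prod_encode (mm i j, n)))}"
definition "rk \<sigma> i = (LEAST j. j = fst \<sigma> \<or> (j \<in> I \<and> j \<noteq> i \<and> \<not> Dc \<sigma> i j < Dc \<sigma> j i))"
definition "ch \<sigma> c = (if \<exists>i\<in>I. i \<le> fst \<sigma> \<and> c i < rk \<sigma> i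
   then Some (LEAST i. i \<in> I \<and> i \<le> fst \<sigma> \<and> c i < rk \<sigma> i) else None)"

primrec cnt :: "diag \<Rightarrow> nat \<Rightarrow> nat \<Rightarrow> nat" where
  "cnt S 0 = (\<lambda>_. 0)"
| "cnt S (Suc s) = (case ch (restr S s) (cnt S s) of None \<Rightarrow> cnt S s
      | Some i \<Rightarrow> (cnt S s)(i := cnt S s i + 1))"

definition "out S s = ch (restr S s) (cnt S s)"

definition "tru S i = (\<forall>m. E0 (column (\<Gamma> S) m) (column (p i) m))"

lemma cK: "countable K" using fam unfolding family_def by blast

lemma Ak_in: "k \<in> I \<Longrightarrow> Ak k \<in> K"
  unfolding I_def Ak_def using cK by (auto simp: from_nat_into_to_nat_on)

lemma Ak_idx: "A \<in> K \<Longrightarrow> Ak (to_nat_on K A) = A"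
  unfolding Ak_def using cK by (simp add: from_nat_into_to_nat_on)

lemma idx_I: "A \<in> K \<Longrightarrow> to_nat_on K A \<in> I"
  unfolding I_def by simp

lemma Ak_eq: "k \<in> I \<Longrightarrow> A \<in> K \<Longrightarrow> Ak k = A \<longleftrightarrow> k = to_nat_on K A"
  unfolding I_def using Ak_idx by auto

lemma K_L: "A \<in> K \<Longrightarrow> A \<in> L"
proof -
  assume A: "A \<in> K"
  have "iso sig A A" unfolding iso_def by (rule exI[of _ id]) simp
  moreover have "is_structure sig A" using fam A unfolding family_def by blast
  ultimately show ?thesis using A unfolding LD_def by blast
qed

lemma E0_sym: "E0 a b \<Longrightarrow> E0 b a"
  unfolding E0_def by metis

lemma exists_tru: "S \<in> L \<Longrightarrow> \<exists>i\<in>I. tru S i"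
proof -
  assume S: "S \<in> L"
  then obtain A where A: "A \<in> K" "iso sig S A" unfolding LD_def by blast
  then have "E3 (\<Gamma> S) (\<Gamma> A)" using red S K_L by blast
  then have "tru S (to_nat_on K A)" unfolding tru_def p_def Ak_idx[OF A(1)] E3_def .
  then show ?thesis using idx_I[OF A(1)] by blast
qed

lemma tru_iff: "S \<in> L \<Longrightarrow> A \<in> K \<Longrightarrow> iso sig A S \<longleftrightarrow> tru S (to_nat_on K A)"
proof -
  assume S: "S \<in> L" and A: "A \<in> K"
  have "iso sig A S \<longleftrightarrow> E3 (\<Gamma> A) (\<Gamma> S)" using red S K_L[OF A] by blast
  also have "\<dots> \<longleftrightarrow> tru S (to_nat_on K A)"
    unfolding tru_def p_def Ak_idx[OF A] E3_def using E0_sym by blast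
  finally show ?thesis .
qed

lemma mm_prop:
  assumes "i \<in> I" "j \<in> I" "i \<noteq> j"
  shows "\<not> E0 (column (p i) (mm i j)) (column (p j) (mm i j))"
proof -
  have ne: "Ak i \<noteq> Ak j" using assms unfolding I_def Ak_def using cK
    by (auto simp: from_nat_into_to_nat_on)
  have "\<not> iso sig (Ak i) (Ak j)" using fam ne Ak_in[OF assms(1)] Ak_in[OF assms(2)]
    unfolding family_def by blast
  then have "\<not> E3 (p i) (p j)" using red K_L Ak_in assms unfolding p_def by blast
  then have "\<exists>m. \<not> E0 (column (p i) m) (column (p j) m)" unfolding E3_def by blast
  then show ?thesis unfolding mm_def by (rule someI_ex)
qed

lemma rv_true: "S \<in> L \<Longrightarrow> rv (restr S s) x v \<Longrightarrow> v = \<Gamma> S x"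
  unfolding rv_def by auto

lemma rv_event: "S \<in> L \<Longrightarrow> \<exists>s0. \<forall>s\<ge>s0. rv (restr S s) x (\<Gamma> S x)"
proof -
  assume S: "S \<in> L"
  obtain s0 where s0: "\<forall>S'\<in>L. restr S' s0 = restr S s0 \<longrightarrow> \<Gamma> S' x = \<Gamma> S x"
    using cont_point[OF cont S] by blast
  show ?thesis
  proof (intro exI allI impI)
    fix s assume le: "s0 \<le> s"
    show "rv (restr S s) x (\<Gamma> S x)"
      unfolding rv_def fst_restr
    proof (intro ballI impI)
      fix S' assume "S' \<in> L" "restr S' s = restr S s"
      then show "\<Gamma> S' x = \<Gamma> S x" using s0 restr_mono[OF _ le] by blast
    qed
  qed
qed


lemma K1:
  assumes S: "S \<in> L" and t: "tru S i"
  shows "\<exists>B. \<forall>s. Dc (restr S s) i j \<le> B"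
proof -
  define m where "m = mm i j"
  obtain M0 where M0: "\<forall>n\<ge>M0. column (\<Gamma> S) m n = column (p i) m n"
    using t unfolding tru_def E0_def by blast
  have "\<forall>s. Dc (restr S s) i j \<le> M0"
  proof
    fix s
    have "{n. n < s \<and> (\<exists>v. rv (restr S s) (prod_encode (m, n)) v \<and> v \<noteq> p i (prod_encode (m, n)))}
        \<subseteq> {..<M0}"
    proof
      fix n assume "n \<in> {n. n < s \<and> (\<exists>v. rv (restr S s) (prod_encode (m, n)) v \<and> v \<noteq> p i (prod_encode (m, n)))}"
      then obtain v where "rv (restr S s) (prod_encode (m, n)) v" "v \<noteq> p i (prod_encode (m, n))" by blast
      then have "\<Gamma> S (prod_encode (m, n)) \<noteq> p i (prod_encode (m, n))" using rv_true[OF S] by blast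
      then show "n \<in> {..<M0}" using M0 unfolding column_def by (meson lessThan_iff not_le)
    qed
    then show "Dc (restr S s) i j \<le> M0" unfolding Dc_def m_def fst_restr
      by (metis (no_types, lifting) card_lessThan card_mono finite_lessThan)
  qed
  then show ?thesis by blast
qed

lemma K2:
  assumes S: "S \<in> L" and t: "tru S i" and ij: "i \<in> I" "j \<in> I" "j \<noteq> i"
  shows "\<exists>T. \<forall>s\<ge>T. B \<le> Dc (restr S s) j i"
proof -
  define m where "m = mm j i"
  have ne: "\<not> E0 (column (p j) m) (column (p i) m)" unfolding m_def using mm_prop ij by blast
  obtain M0 where M0: "\<forall>n\<ge>M0. column (\<Gamma> S) m n = column (p i) m n"
    using t unfolding tru_def E0_def by blast
  define Z where "Z = {n. \<Gamma> S (prod_encode (m, n)) \<noteq> p j (prod_encode (m, n))}"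
  have "\<forall>a. \<exists>n\<ge>a. n \<in> Z"
  proof
    fix a
    obtain n where "n \<ge> max a M0" "column (p j) m n \<noteq> column (p i) m n"
      using ne unfolding E0_def by blast
    then show "\<exists>n\<ge>a. n \<in> Z" using M0 unfolding Z_def column_def by auto
  qed
  then have "infinite Z" using infinite_nat_iff_unbounded_le by blast
  then obtain Z' where Z': "finite Z'" "card Z' = B" "Z' \<subseteq> Z"
    using infinite_arbitrarily_large by blast
  have "\<forall>n. \<exists>s0. \<forall>s\<ge>s0. rv (restr S s) (prod_encode (m, n)) (\<Gamma> S (prod_encode (m, n)))"
    using rv_event[OF S] by blast
  then obtain f where f: "\<And>n s. s \<ge> f n \<Longrightarrow> rv (restr S s) (prod_encode (m, n)) (\<Gamma> S (prod_encode (m, n)))"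
    by metis
  define T where "T = Max (insert 0 (f ` Z' \<union> Suc ` Z'))"
  have finT: "finite (insert 0 (f ` Z' \<union> Suc ` Z'))" using Z' by simp
  show ?thesis
  proof (intro exI allI impI)
    fix s assume sT: "T \<le> s"
    have sub: "Z' \<subseteq> {n. n < s \<and> (\<exists>v. rv (restr S s) (prod_encode (m, n)) v \<and> v \<noteq> p j (prod_encode (m, n)))}"
    proof
      fix n assume n: "n \<in> Z'"
      have "f n \<le> T" "Suc n \<le> T" unfolding T_def using Max_ge[OF finT] n by auto
      then have "n < s" "rv (restr S s) (prod_encode (m, n)) (\<Gamma> S (prod_encode (m, n)))"
        using sT f by auto
      moreover have "\<Gamma> S (prod_encode (m, n)) \<noteq> p j (prod_encode (m, n))" using n Z' unfolding Z_def by blast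
      ultimately show "n \<in> {n. n < s \<and> (\<exists>v. rv (restr S s) (prod_encode (m, n)) v \<and> v \<noteq> p j (prod_encode (m, n)))}"
        by blast
    qed
    have fin: "finite {n. n < s \<and> (\<exists>v. rv (restr S s) (prod_encode (m, n)) v \<and> v \<noteq> p j (prod_encode (m, n)))}"
      by (rule finite_subset[of _ "{..<s}"]) auto
    show "B \<le> Dc (restr S s) j i" unfolding Dc_def fst_restr m_def[symmetric]
      using card_mono[OF fin sub] Z'(2) by simp
  qed
qed

lemma EV:
  assumes S: "S \<in> L" and t: "tru S i" and ij: "i \<in> I" "j \<in> I" "j \<noteq> i"
  shows "\<exists>T. \<forall>s\<ge>T. Dc (restr S s) i j < Dc (restr S s) j i"
proof -
  obtain B where B: "\<forall>s. Dc (restr S s) i j \<le> B" using K1[OF S t] by blast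
  obtain T where T: "\<forall>s\<ge>T. Suc B \<le> Dc (restr S s) j i" using K2[OF S t ij] by blast
  show ?thesis using B T by (meson le_less_trans lessI order_less_le_trans)
qed

lemma rk_le: "j \<in> I \<Longrightarrow> j \<noteq> i \<Longrightarrow> \<not> Dc \<sigma> i j < Dc \<sigma> j i \<Longrightarrow> rk \<sigma> i \<le> j"
  unfolding rk_def by (rule Least_le) blast

lemma rk_ge:
  assumes "N \<le> fst \<sigma>" "\<forall>j<N. j \<in> I \<longrightarrow> j \<noteq> i \<longrightarrow> Dc \<sigma> i j < Dc \<sigma> j i"
  shows "N \<le> rk \<sigma> i"
proof (rule ccontr)
  assume "\<not> N \<le> rk \<sigma> i"
  then have lt: "rk \<sigma> i < N" by simp
  have "rk \<sigma> i = fst \<sigma> \<or> (rk \<sigma> i \<in> I \<and> rk \<sigma> i \<noteq> i \<and> \<not> Dc \<sigma> i (rk \<sigma> i) < Dc \<sigma> (rk \<sigma> i) i)"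
    unfolding rk_def by (rule LeastI[of _ "fst \<sigma>"]) simp
  then show False using lt assms by auto
qed

lemma rk_infty:
  assumes S: "S \<in> L" and t: "tru S i" and i: "i \<in> I"
  shows "\<exists>T. \<forall>s\<ge>T. N \<le> rk (restr S s) i"
proof -
  have "\<forall>j. \<exists>T. j \<in> I \<and> j \<noteq> i \<longrightarrow> (\<forall>s\<ge>T. Dc (restr S s) i j < Dc (restr S s) j i)"
    using EV[OF S t i] by blast
  then obtain Tf where Tf: "\<And>j s. j \<in> I \<Longrightarrow> j \<noteq> i \<Longrightarrow> s \<ge> Tf j \<Longrightarrow> Dc (restr S s) i j < Dc (restr S s) j i"
    by metis
  define T where "T = max N (Max (insert 0 (Tf ` {..<N})))"
  show ?thesis
  proof (intro exI allI impI)
    fix s assume sT: "T \<le> s"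
    have "\<forall>j<N. j \<in> I \<longrightarrow> j \<noteq> i \<longrightarrow> Dc (restr S s) i j < Dc (restr S s) j i"
    proof (intro allI impI)
      fix j assume "j < N" "j \<in> I" "j \<noteq> i"
      moreover have "Tf j \<le> T"
      proof -
        have "Tf j \<le> Max (insert 0 (Tf ` {..<N}))" by (rule Max_ge) (use \<open>j < N\<close> in auto)
        then show ?thesis unfolding T_def by simp
      qed
      ultimately show "Dc (restr S s) i j < Dc (restr S s) j i" using Tf sT by auto
    qed
    moreover have "N \<le> fst (restr S s)" using sT unfolding T_def by simp
    ultimately show "N \<le> rk (restr S s) i" using rk_ge by blast
  qed
qed

lemma rk_false:
  assumes S: "S \<in> L" and t: "tru S i" and ik: "i \<in> I" "k \<in> I" "k \<noteq> i"
  shows "\<exists>T. \<forall>s\<ge>T. rk (restr S s) k \<le> i"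
proof -
  obtain T where T: "\<forall>s\<ge>T. Dc (restr S s) i k < Dc (restr S s) k i" using EV[OF S t ik] by blast
  show ?thesis
  proof (intro exI allI impI)
    fix s assume "T \<le> s"
    then have "\<not> Dc (restr S s) k i < Dc (restr S s) i k" using T by auto
    then show "rk (restr S s) k \<le> i" using rk_le[of i k] ik by auto
  qed
qed

lemma ch_Some:
  assumes "ch \<sigma> c = Some k"
  shows "k \<in> I \<and> k \<le> fst \<sigma> \<and> c k < rk \<sigma> k"
proof -
  have ex: "\<exists>i. i \<in> I \<and> i \<le> fst \<sigma> \<and> c i < rk \<sigma> i"
    using assms unfolding ch_def by (auto split: if_splits)
  then have "k = (LEAST i. i \<in> I \<and> i \<le> fst \<sigma> \<and> c i < rk \<sigma> i)"
    using assms unfolding ch_def by (auto split: if_splits)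
  then show ?thesis using LeastI_ex[OF ex] by simp
qed

lemma ch_ex:
  assumes "i \<in> I" "i \<le> fst \<sigma>" "c i < rk \<sigma> i"
  shows "\<exists>k\<le>i. ch \<sigma> c = Some k"
proof -
  have "(LEAST i. i \<in> I \<and> i \<le> fst \<sigma> \<and> c i < rk \<sigma> i) \<le> i"
    by (rule Least_le) (use assms in blast)
  moreover have "ch \<sigma> c = Some (LEAST i. i \<in> I \<and> i \<le> fst \<sigma> \<and> c i < rk \<sigma> i)"
    unfolding ch_def using assms by auto
  ultimately show ?thesis by blast
qed

lemma cnt_out: "out S s = Some k \<Longrightarrow> cnt S (Suc s) k = cnt S s k + 1"
  unfolding out_def by simp

lemma cnt_nout: "out S s \<noteq> Some k \<Longrightarrow> cnt S (Suc s) k = cnt S s k"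
  unfolding out_def by (auto split: option.splits)

lemma cnt_Suc_mono: "cnt S s k \<le> cnt S (Suc s) k"
  by (metis cnt_out cnt_nout le_add1 order_refl)

lemma cnt_mono: "s \<le> s' \<Longrightarrow> cnt S s k \<le> cnt S s' k"
  using cnt_Suc_mono by (rule lift_Suc_mono_le)

lemma out_lt: "out S s = Some k \<Longrightarrow> cnt S s k < rk (restr S s) k \<and> k \<in> I"
  unfolding out_def using ch_Some by blast

lemma false_finite:
  assumes S: "S \<in> L" and t: "tru S i" and ik: "i \<in> I" "k \<in> I" "k \<noteq> i"
  shows "finite {s. out S s = Some k}"
proof (rule ccontr)
  assume inf: "infinite {s. out S s = Some k}"
  have io: "\<exists>t\<ge>a. out S t = Some k" for a
    using inf unfolding infinite_nat_iff_unbounded_le by blast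
  obtain T where T: "\<forall>s\<ge>T. rk (restr S s) k \<le> i" using rk_false[OF S t ik] by blast
  have "\<exists>s. B \<le> cnt S s k" for B
  proof (induction B)
    case 0 then show ?case by simp
  next
    case (Suc B)
    then obtain s where "B \<le> cnt S s k" by blast
    moreover obtain t where "t \<ge> s" "out S t = Some k" using io by blast
    ultimately have "Suc B \<le> cnt S (Suc t) k"
      using cnt_out[of S t k] cnt_mono[of s t S k] by (simp del: cnt.simps)
    then show ?case by blast
  qed
  then obtain s0 where s0: "Suc i \<le> cnt S s0 k" by blast
  obtain t where t1: "t \<ge> max s0 T" "out S t = Some k" using io by blast
  have "Suc i \<le> cnt S t k" using s0 cnt_mono[of s0 t S k] t1 by (simp del: cnt.simps)
  moreover have "cnt S t k < rk (restr S t) k" using out_lt t1 by blast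
  moreover have "rk (restr S t) k \<le> i" using T t1 by simp
  ultimately show False by simp
qed

lemma true_infinite:
  assumes S: "S \<in> L" and t: "tru S i" and i: "i \<in> I"
  shows "infinite {s. out S s = Some i}"
proof
  assume fin: "finite {s. out S s = Some i}"
  then obtain T0 where T0: "\<forall>s\<ge>T0. out S s \<noteq> Some i"
    by (metis (mono_tags, lifting) finite_nat_set_iff_bounded_le mem_Collect_eq not_less_eq_eq)
  have const: "s \<ge> T0 \<Longrightarrow> cnt S s i = cnt S T0 i" for s
  proof (induction s rule: dec_induct)
    case base then show ?case by simp
  next
    case (step n) then show ?case using T0 cnt_nout[of S n i] by (simp del: cnt.simps)
  qed
  obtain T1 where T1: "\<forall>s\<ge>T1. Suc (cnt S T0 i) \<le> rk (restr S s) i" using rk_infty[OF S t i] by blast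
  define T where "T = max T0 (max T1 i)"
  have sub: "{s. s \<ge> T} \<subseteq> (\<Union>k\<in>{k. k < i \<and> k \<in> I}. {s. out S s = Some k})"
  proof
    fix s assume "s \<in> {s. s \<ge> T}"
    then have sT: "s \<ge> T" by simp
    have s0: "s \<ge> T0" "s \<ge> T1" "s \<ge> i" using sT unfolding T_def by simp_all
    have "cnt S s i = cnt S T0 i" using const s0(1) .
    moreover have "Suc (cnt S T0 i) \<le> rk (restr S s) i" using T1 s0(2) by blast
    ultimately have lt: "cnt S s i < rk (restr S s) i" by simp
    have ile: "i \<le> fst (restr S s)" using s0(3) by simp
    obtain k where k: "k \<le> i" "ch (restr S s) (cnt S s) = Some k"
      using ch_ex[of i "restr S s" "cnt S s", OF i ile lt] by blast
    then have o: "out S s = Some k" unfolding out_def by simp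
    then have "k \<noteq> i" using T0 s0(1) by blast
    then have "k < i" using k(1) by simp
    moreover have "k \<in> I" using out_lt o by blast
    ultimately show "s \<in> (\<Union>k\<in>{k. k < i \<and> k \<in> I}. {s. out S s = Some k})" using o by blast
  qed
  have "finite {k. k < i \<and> k \<in> I}" by simp
  moreover have "\<And>k. k \<in> {k. k < i \<and> k \<in> I} \<Longrightarrow> finite {s. out S s = Some k}"
    using false_finite[OF S t i] by blast
  ultimately have "finite (\<Union>k\<in>{k. k < i \<and> k \<in> I}. {s. out S s = Some k})"
    by (rule finite_UN_I)
  moreover have "infinite {s::nat. s \<ge> T}"
    unfolding infinite_nat_iff_unbounded_le by (metis max.cobounded1 max.cobounded2 mem_Collect_eq)
  ultimately show False using sub finite_subset by blast
qed

lemma cnt_restr: "t \<le> s \<Longrightarrow> cnt (snd (restr S s)) t = cnt S t"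
proof (induction t)
  case 0 then show ?case by simp
next
  case (Suc t)
  then have "cnt (snd (restr S s)) t = cnt S t" by simp
  moreover have "restr (snd (restr S s)) t = restr S t" using Suc.prems restr_restr by simp
  ultimately show ?case by (simp only: cnt.simps)
qed
end


theorem mainTheorem15:
  fixes sig :: "nat list" and K :: "diag set"
  assumes "family sig K" and "E3_learnable sig K"
  shows "PL_learnable sig K"
proof -
  obtain \<Gamma> where c: "continuous_map (subtopology cantor_top (LD sig K)) baire_top \<Gamma>"
    and r: "\<forall>S\<in>LD sig K. \<forall>T\<in>LD sig K. iso sig S T \<longleftrightarrow> E3 (\<Gamma> S) (\<Gamma> T)"
    using assms(2) unfolding E3_learnable_def by blast
  interpret pl_setup sig K \<Gamma> using assms(1) c r by unfold_locales
  define M where "M = (\<lambda>\<sigma>. map_option Ak (ch \<sigma> (cnt (snd \<sigma>) (fst \<sigma>))))"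
  have Mr: "M (restr S s) = map_option Ak (out S s)" for S s
    unfolding M_def out_def fst_restr using cnt_restr[of s s S] by simp
  show ?thesis unfolding PL_learnable_def
  proof (intro exI conjI ballI allI)
    fix S s assume "S \<in> LD sig K"
    show "M (restr S s) \<in> Some ` K \<union> {None}"
    proof (cases "out S s")
      case None then show ?thesis by (simp add: Mr)
    next
      case (Some k)
      then have "k \<in> I" using out_lt by blast
      then have "Ak k \<in> K" by (rule Ak_in)
      then show ?thesis using Some by (simp add: Mr)
    qed
  next
    fix S A assume S: "S \<in> LD sig K" and A: "A \<in> K"
    have eq: "{n. M (restr S n) = Some A} = {n. out S n = Some (to_nat_on K A)}"
    proof (intro Collect_cong iffI)
      fix n assume "M (restr S n) = Some A"
      then obtain k where k: "out S n = Some k" "Ak k = A" by (auto simp: Mr)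
      then have "k \<in> I" using out_lt by blast
      then show "out S n = Some (to_nat_on K A)" using k Ak_eq[OF `k \<in> I` A] by simp
    next
      fix n assume "out S n = Some (to_nat_on K A)"
      then show "M (restr S n) = Some A" by (simp add: Mr Ak_idx[OF A])
    qed
    obtain i where i: "i \<in> I" "tru S i" using exists_tru[OF S] by blast
    show "infinite {n. M (restr S n) = Some A} \<longleftrightarrow> iso sig A S"
      unfolding eq tru_iff[OF S A]
    proof
      assume inf: "infinite {n. out S n = Some (to_nat_on K A)}"
      show "tru S (to_nat_on K A)"
      proof (rule ccontr)
        assume nt: "\<not> tru S (to_nat_on K A)"
        then have "to_nat_on K A \<noteq> i" using i by blast
        then have "finite {n. out S n = Some (to_nat_on K A)}"
          using false_finite[OF S i(2) i(1) idx_I[OF A]] by blast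
        then show False using inf by blast
      qed
    next
      assume "tru S (to_nat_on K A)"
      then show "infinite {n. out S n = Some (to_nat_on K A)}"
        using true_infinite[OF S _ idx_I[OF A]] by blast
    qed
  qed
qed

end
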